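(* Let $\xi=e^{i\pi/5}$, $\tau=\frac{1+\sqrt5}{2}$, $\tau'=\frac{1-\sqrt5}{2}$, and for $n\in\mathbb{N}$ let $Q_2(n)=\{\sum_{j=0}^9 n_j\xi^j: n_j\in\mathbb{N}_0,\ \sum_j n_j\le n\}$. Let $M=\{(x_1+\tau x_2)+(x_3+\tau x_4)\xi^4: x_i\in\mathbb{Z}\}$ and define $*:M\to\mathbb{C}$ by $\big((x_1+\tau x_2)+(x_3+\tau x_4)\xi^4\big)^*=(x_1+\tau' x_2)+(x_3+\tau' x_4)\xi^8$. Let $D(n)$ be the closed convex hull of the regular decagon with vertices $n\xi^j$, $j=0,\dots,9$, and $\Sigma(D(n))=\{x\in M: x^*\in D(n)\}$. Then $Q_2(n)\subset\Sigma(D(n))\cap D(n)$.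
   Context: $M=\mathbb{Z}[\tau]\{\xi^j\}$ is the $\mathbb{Z}[\tau]$-span of the tenth roots of unity, and $\Sigma(D(n))$ is the two-dimensional cut-and-project quasicrystal with acceptance window $D(n)$. *)

theory Defs
  imports "HOL-Analysis.Analysis"
begin

definition xi :: complex where "xi = exp (\<i> * of_real pi / 5)"

definition tau :: real where "tau = (1 + sqrt 5) / 2"

definition tau' :: real where "tau' = (1 - sqrt 5) / 2"

definition Q2 :: "nat \<Rightarrow> complex set" where
  "Q2 n = {\<Sum>j<10. of_nat (m j) * xi ^ j | m :: nat \<Rightarrow> nat. (\<Sum>j<10. m j) \<le> n}"

definition M :: "complex set" where
  "M = {complex_of_real (of_int x1 + tau * of_int x2)
        + complex_of_real (of_int x3 + tau * of_int x4) * xi ^ 4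
        | x1 x2 x3 x4 :: int. True}"

definition star :: "complex \<Rightarrow> complex" where
  "star z = (THE w. \<exists>x1 x2 x3 x4 :: int.
      z = complex_of_real (of_int x1 + tau * of_int x2)
          + complex_of_real (of_int x3 + tau * of_int x4) * xi ^ 4
    \<and> w = complex_of_real (of_int x1 + tau' * of_int x2)
          + complex_of_real (of_int x3 + tau' * of_int x4) * xi ^ 8)"

definition D :: "nat \<Rightarrow> complex set" where
  "D n = closure (convex hull {of_nat n * xi ^ j | j. j < (10::nat)})"

definition Sigma_win :: "complex set \<Rightarrow> complex set" where
  "Sigma_win W = {x \<in> M. star x \<in> W}"

end

theory Submission
  imports Defs "HOL-Computational_Algebra.Primes"
begin

lemma sq5: fixes a b :: int assumes "a^2 = 5 * b^2" shows "b = 0"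
proof (rule ccontr)
  assume b: "b \<noteq> 0"
  then have a: "a \<noteq> 0" using assms by auto
  have p: "prime (5::int)" by simp
  have e1: "multiplicity 5 (a^2) = 2 * multiplicity 5 a"
    using p a by (simp add: prime_elem_multiplicity_power_distrib)
  have e2: "multiplicity 5 (5 * b^2) = 1 + 2 * multiplicity (5::int) b"
    using p b by (simp add: prime_elem_multiplicity_mult_distrib prime_elem_multiplicity_power_distrib)
  have e3: "multiplicity (5::int) (a^2) = multiplicity 5 (5*b^2)" using assms by (rule arg_cong)
  define x where "x = multiplicity 5 a"
  define y where "y = multiplicity (5::int) b"
  have "2 * x = 1 + 2 * y" using e1 e2 e3 unfolding x_def y_def by linarith
  then show False by presburger
qed

lemma xi_cis: "xi = cis (pi/5)" unfolding xi_def cis_conv_exp by (simp add: mult.commute)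

lemma xi5: "xi^5 = -1"
proof -
  have "xi^5 = cis (5 * (pi/5))" unfolding xi_cis using Complex.DeMoivre[of "pi/5" 5] by simp
  then show ?thesis by simp
qed

lemma Re_xi: "Re xi = cos (pi/5)" and Im_xi: "Im xi = sin (pi/5)" by (simp_all add: xi_cis)

lemma xi_cnj: "xi * cnj xi = 1"
  by (simp add: xi_cis cis_cnj cis_mult) 

lemma xi4: "xi^4 = - cnj xi"
proof -
  have "xi^4 = xi^4 * (xi * cnj xi)" by (simp add: xi_cnj)
  also have "\<dots> = xi^5 * cnj xi" by algebra
  finally show ?thesis by (simp add: xi5)
qed

lemma xi_ne: "xi \<noteq> -1"
proof
  assume h: "xi = -1"
  have "Re xi = -1" by (subst h) simp
  moreover have "cos (pi/5) > 0" by (rule cos_gt_zero) auto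
  ultimately show False by (simp add: Re_xi)
qed

lemma phi10: "xi^4 - xi^3 + xi^2 - xi + 1 = 0"
proof -
  have "(xi + 1) * (xi^4 - xi^3 + xi^2 - xi + 1) = xi^5 + 1" by algebra
  also have "\<dots> = 0" by (simp add: xi5)
  finally have h: "(xi + 1) * (xi^4 - xi^3 + xi^2 - xi + 1) = 0" .
  have ne: "xi + 1 \<noteq> 0"
  proof
    assume "xi + 1 = 0"
    then have "xi = -1" by (simp add: eq_neg_iff_add_eq_0)
    with xi_ne show False by simp
  qed
  show ?thesis using h ne by simp
qed

lemma xi_tau: "xi - xi^4 = complex_of_real tau"
proof -
  define s where "s = 2 * cos (pi/5)"
  have sdef: "xi - xi^4 = complex_of_real s" unfolding xi4 s_def
    using complex_add_cnj[of xi] by (simp add: Re_xi)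
  have spos: "s > 0" unfolding s_def by (simp add: cos_gt_zero)
  have "complex_of_real (s^2 - s - 1) = (xi - xi^4)^2 - (xi - xi^4) - 1" by (simp add: sdef)
  also have "\<dots> = (xi^4 - xi^3 + xi^2 - xi + 1) + (xi^5 + 1) * (xi^3 - 2)" by algebra
  also have "\<dots> = 0" by (simp add: phi10 xi5)
  finally have "s^2 - s - 1 = 0" by (metis of_real_eq_0_iff)
  have tt1: "tau + tau' = 1" unfolding tau_def tau'_def by (simp add: field_simps)
  have "(1 + sqrt 5) * (1 - sqrt 5) = 1 - (sqrt 5)^2" by algebra
  then have tt2: "tau * tau' = -1" unfolding tau_def tau'_def by simp
  have "(s - tau) * (s - tau') = s^2 - s * (tau + tau') + tau * tau'" by algebra
  also have "\<dots> = 0" using \<open>s^2 - s - 1 = 0\<close> tt1 tt2 by simp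
  finally have "(s - tau) * (s - tau') = 0" .
  moreover have "s - tau' > 0"
  proof -
    have "sqrt 5 > 1" by simp
    then have "(sqrt 5 - 1)/2 > 0" by simp
    moreover have "s - tau' = s + (sqrt 5 - 1)/2" unfolding tau'_def by (simp add: field_simps)
    ultimately show ?thesis using spos by linarith
  qed
  ultimately have "s = tau" by simp
  then show ?thesis using sdef by simp
qed


definition emb :: "real \<Rightarrow> complex \<Rightarrow> int \<Rightarrow> int \<Rightarrow> int \<Rightarrow> int \<Rightarrow> complex" where
  "emb t w a b c d = complex_of_real (of_int a + t * of_int b) + complex_of_real (of_int c + t * of_int d) * w"

definition ca :: "nat \<Rightarrow> int" where "ca j = [1,0,0,1,0,-1,0,0,-1,0] ! j"
definition cb :: "nat \<Rightarrow> int" where "cb j = [0,1,1,0,0,0,-1,-1,0,0] ! j"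
definition cc :: "nat \<Rightarrow> int" where "cc j = [0,1,0,0,1,0,-1,0,0,-1] ! j"
definition cd :: "nat \<Rightarrow> int" where "cd j = [0,0,1,1,0,0,0,-1,-1,0] ! j"

lemma poly_coords:
  fixes T w :: complex
  assumes h1: "T^2 = T + 1" and h2: "w^2 = - T * w - 1" and j: "j < 10"
  shows "(T + w)^j = (of_int (ca j) + T * of_int (cb j)) + (of_int (cc j) + T * of_int (cd j)) * w"
proof -
  have "j = 0 \<or> j = 1 \<or> j = 2 \<or> j = 3 \<or> j = 4 \<or> j = 5 \<or> j = 6 \<or> j = 7 \<or> j = 8 \<or> j = 9"
    using j by presburger
  then show ?thesis
    apply (elim disjE)
    apply (simp_all add: ca_def cb_def cc_def cd_def)
    apply ((thin_tac "j = _", use h1 h2 in algebra)+)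
    done
qed

lemma coords:
  fixes e :: complex
  assumes e5: "e^5 = -1" and et: "e - e^4 = complex_of_real t" and t2: "t^2 = t + 1" and j: "j < 10"
  shows "e^j = emb t (e^4) (ca j) (cb j) (cc j) (cd j)"
proof -
  define T where "T = complex_of_real t"
  define w where "w = e^4"
  have eT: "e = T + w" using et unfolding T_def w_def by (simp add: algebra_simps)
  have h1: "T^2 = T + 1" unfolding T_def using t2 by (metis of_real_add of_real_1 of_real_power)
  have ew: "e * w = -1" unfolding w_def using e5 by algebra
  have "(T + w) * w = -1" using ew eT by simp
  then have h2: "w^2 = - T * w - 1" by algebra
  have "e^j = (of_int (ca j) + T * of_int (cb j)) + (of_int (cc j) + T * of_int (cd j)) * w"
    using poly_coords[OF h1 h2 j] eT by simp
  then show ?thesis unfolding emb_def T_def w_def by simp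
qed

lemma tau2: "tau^2 = tau + 1"
proof -
  have a: "(1 + sqrt 5)^2 = 6 + 2 * sqrt 5" by (simp add: power2_eq_square algebra_simps)
  show ?thesis unfolding tau_def power_divide a by simp
qed

lemma tau'2: "tau'^2 = tau' + 1"
proof -
  have a: "(1 - sqrt 5)^2 = 6 - 2 * sqrt 5" by (simp add: power2_eq_square algebra_simps)
  show ?thesis unfolding tau'_def power_divide a by simp
qed

lemma xi_coords: "j < 10 \<Longrightarrow> xi^j = emb tau (xi^4) (ca j) (cb j) (cc j) (cd j)"
  using coords[OF xi5 xi_tau tau2] by blast

lemma xi7_5: "(xi^7)^5 = -1"
proof -
  have "(xi^7)^5 = (xi^5)^7" by (simp add: power_mult[symmetric] mult.commute)
  then show ?thesis by (simp add: xi5)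
qed

lemma xi10: "xi^10 = 1"
proof -
  have "xi^10 = (xi^5)^2" by (simp add: power_mult[symmetric])
  then show ?thesis by (simp add: xi5)
qed

lemma xi7_4: "(xi^7)^4 = xi^8"
proof -
  have "(xi^7)^4 = (xi^10)^2 * xi^8" by (simp add: power_mult[symmetric] power_add[symmetric])
  then show ?thesis unfolding xi10 by simp
qed

lemma xi7_tau: "xi^7 - (xi^7)^4 = complex_of_real tau'"
proof -
  have "xi^7 - (xi^7)^4 = xi^7 - xi^8" unfolding xi7_4 ..
  also have "\<dots> = 1 - complex_of_real tau"
    using xi_coords[of 7] xi_coords[of 8] by (simp add: emb_def ca_def cb_def cc_def cd_def)
  also have "\<dots> = complex_of_real tau'" unfolding tau_def tau'_def by (simp add: field_simps)
  finally show ?thesis .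
qed

lemma xi7_coords: "j < 10 \<Longrightarrow> (xi^7)^j = emb tau' (xi^8) (ca j) (cb j) (cc j) (cd j)"
  using coords[OF xi7_5 xi7_tau tau'2] unfolding xi7_4 by blast


lemma lin_indep:
  fixes p q :: int
  assumes "of_int p + tau * of_int q = 0"
  shows "p = 0 \<and> q = 0"
proof -
  have "2 * of_int p + of_int q + of_int q * sqrt 5 = (0::real)"
    using assms unfolding tau_def by (simp add: field_simps)
  then have e: "of_int q * sqrt 5 = - real_of_int (2 * p + q)" by simp
  have "(of_int q * sqrt 5)^2 = (real_of_int (2 * p + q))^2" unfolding e power2_minus ..
  then have "real_of_int ((2 * p + q)^2) = real_of_int (5 * q^2)"
    by (simp add: power_mult_distrib)
  then have "(2 * p + q)^2 = 5 * q^2" by (rule of_int_eq_iff[THEN iffD1])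
  then have q: "q = 0" by (rule sq5)
  then show ?thesis using assms by simp
qed

lemma Im_xi4: "Im (xi^4) > 0"
  by (simp add: xi4 Im_xi sin_gt_zero)

lemma emb_inj:
  assumes h: "emb tau (xi^4) a b c d = emb tau (xi^4) a' b' c' d'"
  shows "a = a' \<and> b = b' \<and> c = c' \<and> d = d'"
proof -
  have "Im (emb tau (xi^4) a b c d) = Im (emb tau (xi^4) a' b' c' d')" using h by simp
  then have "(of_int c + tau * of_int d) * Im (xi^4) = (of_int c' + tau * of_int d') * Im (xi^4)"
    by (simp add: emb_def)
  then have "of_int c + tau * of_int d = of_int c' + tau * of_int d'" using Im_xi4 by simp
  then have "of_int (c - c') + tau * of_int (d - d') = 0" by (simp add: algebra_simps)
  then have cd: "c = c' \<and> d = d'" using lin_indep by fastforce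
  have "Re (emb tau (xi^4) a b c d) = Re (emb tau (xi^4) a' b' c' d')" using h by simp
  then have "of_int a + tau * of_int b = of_int a' + tau * of_int b'"
    using cd by (simp add: emb_def)
  then have "of_int (a - a') + tau * of_int (b - b') = 0" by (simp add: algebra_simps)
  then have "a = a' \<and> b = b'" using lin_indep by fastforce
  then show ?thesis using cd by simp
qed

lemma emb_M: "emb tau (xi^4) a b c d \<in> M"
  unfolding M_def emb_def by blast

lemma star_emb: "star (emb tau (xi^4) a b c d) = emb tau' (xi^8) a b c d"
proof -
  have "(THE w. \<exists>x1 x2 x3 x4 :: int.
      emb tau (xi^4) a b c d = complex_of_real (of_int x1 + tau * of_int x2)
          + complex_of_real (of_int x3 + tau * of_int x4) * xi ^ 4
    \<and> w = complex_of_real (of_int x1 + tau' * of_int x2)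
          + complex_of_real (of_int x3 + tau' * of_int x4) * xi ^ 8) = emb tau' (xi^8) a b c d"
  proof (rule the_equality)
    show "\<exists>x1 x2 x3 x4 :: int.
      emb tau (xi^4) a b c d = complex_of_real (of_int x1 + tau * of_int x2)
          + complex_of_real (of_int x3 + tau * of_int x4) * xi ^ 4
    \<and> emb tau' (xi^8) a b c d = complex_of_real (of_int x1 + tau' * of_int x2)
          + complex_of_real (of_int x3 + tau' * of_int x4) * xi ^ 8"
      unfolding emb_def by blast
  next
    fix w
    assume "\<exists>x1 x2 x3 x4 :: int.
      emb tau (xi^4) a b c d = complex_of_real (of_int x1 + tau * of_int x2)
          + complex_of_real (of_int x3 + tau * of_int x4) * xi ^ 4
    \<and> w = complex_of_real (of_int x1 + tau' * of_int x2)
          + complex_of_real (of_int x3 + tau' * of_int x4) * xi ^ 8"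
    then obtain x1 x2 x3 x4 :: int where
      h1: "emb tau (xi^4) a b c d = complex_of_real (of_int x1 + tau * of_int x2)
          + complex_of_real (of_int x3 + tau * of_int x4) * xi ^ 4"
      and h2: "w = complex_of_real (of_int x1 + tau' * of_int x2)
          + complex_of_real (of_int x3 + tau' * of_int x4) * xi ^ 8" by blast
    have "emb tau (xi^4) a b c d = emb tau (xi^4) x1 x2 x3 x4" using h1 unfolding emb_def[of _ _ x1] .
    then have "a = x1 \<and> b = x2 \<and> c = x3 \<and> d = x4" by (rule emb_inj)
    then show "w = emb tau' (xi^8) a b c d" using h2 unfolding emb_def by simp
  qed
  then show ?thesis unfolding star_def .
qed

lemma emb_alt: "emb t w a b c d = of_int a + of_real t * of_int b + of_int c * w + of_real t * of_int d * w"
  by (simp add: emb_def algebra_simps)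

lemma emb_sum:
  "(\<Sum>j\<in>A. of_nat (m j) * emb t w (a j) (b j) (c j) (d j)) =
   emb t w (\<Sum>j\<in>A. int (m j) * a j) (\<Sum>j\<in>A. int (m j) * b j) (\<Sum>j\<in>A. int (m j) * c j) (\<Sum>j\<in>A. int (m j) * d j)"
proof (induct A rule: infinite_finite_induct)
  case (infinite A) then show ?case by (simp add: emb_def)
next
  case empty then show ?case by (simp add: emb_def)
next
  case (insert x F) then show ?case by (simp add: emb_alt algebra_simps)
qed

lemma conv0:
  fixes S :: "'a::real_vector set"
  assumes cv: "convex S" and z: "0 \<in> S" and fin: "finite I" and c: "\<forall>i\<in>I. 0 \<le> c i"
    and s1: "sum c I \<le> 1" and x: "\<forall>i\<in>I. x i \<in> S"
  shows "(\<Sum>i\<in>I. c i *\<^sub>R x i) \<in> S"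
proof (cases "sum c I = 0")
  case True
  then have "\<forall>i\<in>I. c i = 0" using fin c sum_nonneg_eq_0_iff by blast
  then show ?thesis using z by simp
next
  case False
  define s where "s = sum c I"
  have spos: "s > 0" using False c unfolding s_def by (metis order_le_less sum_nonneg)
  have "(\<Sum>i\<in>I. c i / s) = 1" using spos unfolding s_def by (simp add: sum_divide_distrib[symmetric])
  then have y: "(\<Sum>i\<in>I. (c i / s) *\<^sub>R x i) \<in> S"
    using fin cv c spos x by (intro convex_sum) auto
  have eq: "(\<Sum>i\<in>I. c i *\<^sub>R x i) = s *\<^sub>R (\<Sum>i\<in>I. (c i / s) *\<^sub>R x i) + (1 - s) *\<^sub>R 0"
    using spos by (simp add: scaleR_sum_right)
  show ?thesis unfolding eq
    using convexD[OF cv y z, of s "1 - s"] spos s1 unfolding s_def by simp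
qed

lemma in_D:
  fixes m :: "nat \<Rightarrow> nat" and p :: "nat \<Rightarrow> complex"
  assumes p: "\<forall>j<10. \<exists>k<10. p j = xi^k" and mn: "(\<Sum>j<10. m j) \<le> n"
  shows "(\<Sum>j<10. of_nat (m j) * p j) \<in> D n"
proof -
  define P where "P = {of_nat n * xi^j | j. j < (10::nat)}"
  define S where "S = convex hull P"
  have sub: "S \<subseteq> D n" unfolding D_def S_def P_def by (rule closure_subset)
  have cvx: "convex S" unfolding S_def by simp
  have Pin: "of_nat n * xi^k \<in> S" if "k < 10" for k
    unfolding S_def by (rule hull_inc) (use that in \<open>auto simp: P_def\<close>)
  have "(1/2) *\<^sub>R (of_nat n * xi^0) + (1/2) *\<^sub>R (of_nat n * xi^5) \<in> S"
    by (rule convexD[OF cvx Pin Pin]) auto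
  then have z: "0 \<in> S" by (simp add: xi5)
  have "(\<Sum>j<10. of_nat (m j) * p j) \<in> S"
  proof (cases "n = 0")
    case True
    then have "\<forall>j<10. m j = 0" using mn by simp
    then show ?thesis using z by simp
  next
    case False
    have eq: "(\<Sum>j<10. of_nat (m j) * p j) = (\<Sum>j<10. (real (m j) / real n) *\<^sub>R (of_nat n * p j))"
      using False by (intro sum.cong) (auto simp: scaleR_conv_of_real)
    have s1: "(\<Sum>j<10. real (m j) / real n) \<le> 1"
    proof -
      have "(\<Sum>j<10. real (m j) / real n) = real (\<Sum>j<10. m j) / real n"
        by (simp add: sum_divide_distrib[symmetric])
      also have "\<dots> \<le> 1" using mn False by (simp del: of_nat_sum add: divide_le_eq_1)
      finally show ?thesis .
    qed
    have xs: "\<forall>j\<in>{..<10}. of_nat n * p j \<in> S"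
    proof
      fix j :: nat assume "j \<in> {..<10}"
      then obtain k where "k < 10" "p j = xi^k" using p by auto
      then show "of_nat n * p j \<in> S" using Pin by simp
    qed
    show ?thesis unfolding eq
      by (rule conv0[OF cvx z]) (use s1 xs in auto)
  qed
  then show ?thesis using sub by blast
qed

lemma xi7_pow: "\<exists>k<10. (xi^7)^j = xi^k"
proof -
  define q where "q = 7 * j div 10"
  define r where "r = 7 * j mod 10"
  have qr: "7 * j = 10 * q + r" unfolding q_def r_def by simp
  have r: "r < 10" unfolding r_def by simp
  have "(xi^7)^j = xi^(7*j)" by (simp only: power_mult)
  also have "\<dots> = xi^(10 * q + r)" by (simp only: qr)
  also have "\<dots> = (xi^10)^q * xi^r" by (simp only: power_add power_mult)
  also have "\<dots> = xi^r" by (simp add: xi10)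
  finally show ?thesis using r by blast
qed

theorem lemma6p16:
  fixes n :: nat
  shows "Q2 n \<subseteq> Sigma_win (D n) \<inter> D n"
proof
  fix z assume "z \<in> Q2 n"
  then obtain m :: "nat \<Rightarrow> nat" where z: "z = (\<Sum>j<10. of_nat (m j) * xi ^ j)" and mn: "(\<Sum>j<10. m j) \<le> n"
    unfolding Q2_def by blast
  define A where "A = (\<Sum>j<10. int (m j) * ca j)"
  define B where "B = (\<Sum>j<10. int (m j) * cb j)"
  define C where "C = (\<Sum>j<10. int (m j) * cc j)"
  define E where "E = (\<Sum>j<10. int (m j) * cd j)"
  have "z = (\<Sum>j<10. of_nat (m j) * emb tau (xi^4) (ca j) (cb j) (cc j) (cd j))"
    unfolding z by (rule sum.cong[OF refl]) (metis xi_coords lessThan_iff)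
  also have "\<dots> = emb tau (xi^4) A B C E" unfolding A_def B_def C_def E_def by (rule emb_sum)
  finally have zA: "z = emb tau (xi^4) A B C E" .
  have "star z = emb tau' (xi^8) A B C E" unfolding zA by (rule star_emb)
  also have "\<dots> = (\<Sum>j<10. of_nat (m j) * emb tau' (xi^8) (ca j) (cb j) (cc j) (cd j))"
    unfolding A_def B_def C_def E_def by (rule emb_sum[symmetric])
  also have "\<dots> = (\<Sum>j<10. of_nat (m j) * (xi^7)^j)"
    by (rule sum.cong[OF refl]) (metis xi7_coords lessThan_iff)
  finally have sz: "star z = (\<Sum>j<10. of_nat (m j) * (xi^7)^j)" .
  have zM: "z \<in> M" unfolding zA by (rule emb_M)
  have zD: "z \<in> D n" unfolding z by (rule in_D) (use mn in auto)
  have szD: "star z \<in> D n" unfolding sz by (rule in_D) (use mn xi7_pow in auto)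
  show "z \<in> Sigma_win (D n) \<inter> D n" using zM zD szD unfolding Sigma_win_def by simp
qed

end
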